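(* Let $(X,\mu)$ be a Lebesgue space with a continuous probability measure $\mu$, and let $\rho_1,\rho_2$ be admissible metrics on $X$ that coincide $(\mu\times\mu)$-almost everywhere on $X\times X$. Then there exists a subset $X'\subset X$ of full $\mu$-measure such that $\rho_1(x,y)=\rho_2(x,y)$ for all $x,y\in X'$.
   Context: A metric on a Lebesgue space is admissible if its restriction to some set of full measure is a separable metric space. *)

theory Defs
  imports "HOL-Probability.Probability"
begin

definition full_measure_set :: "'a measure \<Rightarrow> 'a set \<Rightarrow> bool" where
  "full_measure_set M A \<longleftrightarrow> A \<subseteq> space M \<and> A \<in> sets M \<and> emeasure M (space M - A) = 0"

definition iso_mod0 :: "'a measure \<Rightarrow> 'b measure \<Rightarrow> bool" where
  "iso_mod0 M N \<longleftrightarrow> (\<exists>A B f. full_measure_set M A \<and> full_measure_set N B \<and> bij_betw f A B \<and>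
     (\<forall>S. S \<subseteq> A \<longrightarrow> (S \<in> sets M \<longleftrightarrow> f ` S \<in> sets N)) \<and>
     (\<forall>S. S \<subseteq> A \<longrightarrow> S \<in> sets M \<longrightarrow> emeasure N (f ` S) = emeasure M S))"

definition lebesgue_space :: "'a measure \<Rightarrow> bool" where
  "lebesgue_space M \<longleftrightarrow> prob_space M \<and> complete_measure M \<and>
     (\<exists>\<nu> :: real measure. sets \<nu> = sets borel \<and> prob_space \<nu> \<and> iso_mod0 M (completion \<nu>))"

definition continuous_measure :: "'a measure \<Rightarrow> bool" where
  "continuous_measure M \<longleftrightarrow> (\<forall>x\<in>space M. emeasure M {x} = 0)"

definition metric_on :: "'a set \<Rightarrow> ('a \<Rightarrow> 'a \<Rightarrow> real) \<Rightarrow> bool" where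
  "metric_on A \<rho> \<longleftrightarrow> (\<forall>x\<in>A. \<forall>y\<in>A. 0 \<le> \<rho> x y \<and> (\<rho> x y = 0 \<longleftrightarrow> x = y) \<and> \<rho> x y = \<rho> y x) \<and>
     (\<forall>x\<in>A. \<forall>y\<in>A. \<forall>z\<in>A. \<rho> x z \<le> \<rho> x y + \<rho> y z)"

definition separable_on :: "'a set \<Rightarrow> ('a \<Rightarrow> 'a \<Rightarrow> real) \<Rightarrow> bool" where
  "separable_on A \<rho> \<longleftrightarrow> (\<exists>D. countable D \<and> D \<subseteq> A \<and> (\<forall>x\<in>A. \<forall>e>0. \<exists>d\<in>D. \<rho> x d < e))"

definition admissible_metric :: "'a measure \<Rightarrow> ('a \<Rightarrow> 'a \<Rightarrow> real) \<Rightarrow> bool" where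
  "admissible_metric M \<rho> \<longleftrightarrow> metric_on (space M) \<rho> \<and>
     (\<lambda>z. \<rho> (fst z) (snd z)) \<in> borel_measurable (M \<Otimes>\<^sub>M M) \<and>
     (\<exists>A. full_measure_set M A \<and> separable_on A \<rho>)"

end

theory Submission
  imports Defs
begin

lemma metric_tri: "metric_on A \<rho> \<Longrightarrow> x\<in>A \<Longrightarrow> y\<in>A \<Longrightarrow> z\<in>A \<Longrightarrow> \<rho> x z \<le> \<rho> x y + \<rho> y z"
  unfolding metric_on_def by (elim conjE) (drule bspec, assumption, drule bspec, assumption, drule bspec, assumption, assumption)

lemma metric_sym: "metric_on A \<rho> \<Longrightarrow> x\<in>A \<Longrightarrow> y\<in>A \<Longrightarrow> \<rho> x y = \<rho> y x"
  unfolding metric_on_def by simp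

theorem mainTheorem3:
  fixes M :: "'a measure" and \<rho>1 \<rho>2 :: "'a \<Rightarrow> 'a \<Rightarrow> real"
  assumes "lebesgue_space M" and "continuous_measure M"
    and "admissible_metric M \<rho>1" and "admissible_metric M \<rho>2"
    and "AE z in M \<Otimes>\<^sub>M M. \<rho>1 (fst z) (snd z) = \<rho>2 (fst z) (snd z)"
  shows "\<exists>X'. full_measure_set M X' \<and> (\<forall>x\<in>X'. \<forall>y\<in>X'. \<rho>1 x y = \<rho>2 x y)"
proof -
  have ps: "prob_space M" using assms(1) unfolding lebesgue_space_def by simp
  then interpret prob_space M .
  have sf: "sigma_finite_measure M" using ps by (rule prob_space_imp_sigma_finite)
  interpret pair_sigma_finite M M using sf by (simp add: pair_sigma_finite_def)
  have met1: "metric_on (space M) \<rho>1" and m1: "(\<lambda>z. \<rho>1 (fst z) (snd z)) \<in> borel_measurable (M \<Otimes>\<^sub>M M)"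
    and "\<exists>A. full_measure_set M A \<and> separable_on A \<rho>1"
    using assms(3) unfolding admissible_metric_def by auto
  then obtain A D where A: "full_measure_set M A" and D: "countable D" "D \<subseteq> A"
    "\<forall>x\<in>A. \<forall>e>0. \<exists>d\<in>D. \<rho>1 x d < e"
    unfolding separable_on_def by blast
  have m2: "(\<lambda>z. \<rho>2 (fst z) (snd z)) \<in> borel_measurable (M \<Otimes>\<^sub>M M)"
    using assms(4) unfolding admissible_metric_def by auto
  have Asp: "A \<subseteq> space M" "A \<in> sets M" "emeasure M (space M - A) = 0"
    using A unfolding full_measure_set_def by auto
  have f1: "(\<lambda>y. \<rho>1 x y) \<in> borel_measurable M" if "x \<in> space M" for x
    using measurable_Pair2[OF m1 that] by simp
  have f2: "(\<lambda>y. \<rho>2 x y) \<in> borel_measurable M" if "x \<in> space M" for x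
    using measurable_Pair2[OF m2 that] by simp
  define B where "B d n = {y\<in>space M. \<rho>1 d y < 1 / (Suc n)}" for d n
  have Bs: "B d n \<in> sets M" if "d \<in> space M" for d n
  proof -
    have [measurable]: "(\<lambda>y. \<rho>1 d y) \<in> borel_measurable M" using f1 that .
    show ?thesis unfolding B_def by measurable
  qed
  define I where "I = {(d,n). d \<in> D \<and> emeasure M (B d n) = 0}"
  define N1 where "N1 = (\<Union>i\<in>I. B (fst i) (snd i))"
  have "countable I"
    by (rule countable_subset[of _ "D \<times> UNIV"]) (auto simp: I_def D(1))
  moreover have "B (fst i) (snd i) \<in> null_sets M" if "i \<in> I" for i
  proof -
    have "fst i \<in> D" "emeasure M (B (fst i) (snd i)) = 0" using that by (auto simp: I_def)
    moreover have "fst i \<in> space M" using \<open>fst i \<in> D\<close> D(2) Asp(1) by blast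
    ultimately show ?thesis using Bs by (simp add: null_sets_def)
  qed
  ultimately have N1n: "N1 \<in> null_sets M" unfolding N1_def
    by (rule null_sets_UN')
  have "AE x in M. AE y in M. \<rho>1 x y = \<rho>2 x y"
    using AE_pair[OF assms(5)] by simp
  then obtain N2 where N2: "{x\<in>space M. \<not> (AE y in M. \<rho>1 x y = \<rho>2 x y)} \<subseteq> N2"
    "emeasure M N2 = 0" "N2 \<in> sets M" by (rule AE_E)
  define X where "X = A - N1 - N2"
  have Xs: "X \<in> sets M" using Asp N1n N2 by (auto simp: X_def)
  have sub0: "space M - X \<subseteq> (space M - A) \<union> N1 \<union> N2" unfolding X_def by auto
  have nul0: "(space M - A) \<union> N1 \<union> N2 \<in> null_sets M"
  proof -
    have "space M - A \<in> null_sets M" using Asp by auto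
    moreover have "N2 \<in> null_sets M" using N2 by auto
    ultimately show ?thesis using N1n by auto
  qed
  have "space M - X \<in> sets M" using Xs by blast
  hence "space M - X \<in> null_sets M" using null_sets_subset[OF nul0 _ sub0] by blast
  hence "emeasure M (space M - X) = 0" by auto
  hence full: "full_measure_set M X"
    using Xs Asp by (auto simp: full_measure_set_def X_def)
  define E where "E x = {y\<in>space M. \<rho>1 x y \<noteq> \<rho>2 x y}" for x
  have En: "E x \<in> null_sets M" if "x \<in> X" for x
  proof -
    have xs: "x \<in> space M" using that Asp by (auto simp: X_def)
    have [measurable]: "(\<lambda>y. \<rho>1 x y) \<in> borel_measurable M" "(\<lambda>y. \<rho>2 x y) \<in> borel_measurable M"
      using f1 f2 xs by auto
    have Em: "E x \<in> sets M" unfolding E_def by measurable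
    have "AE y in M. \<rho>1 x y = \<rho>2 x y" using that N2(1) xs by (auto simp: X_def)
    hence "emeasure M (E x) = 0"
      using AE_iff_measurable[OF Em, of "\<lambda>y. \<rho>1 x y = \<rho>2 x y"] by (simp add: E_def)
    thus ?thesis using Em by auto
  qed
  have ball: "\<exists>z\<in>space M. \<rho>1 x z < r \<and> z \<notin> E x \<and> z \<notin> E y"
    if x: "x \<in> X" and y: "y \<in> X" and r: "r > 0" for x y r
  proof -
    have xA: "x \<in> A" "x \<notin> N1" using x by (auto simp: X_def)
    obtain n :: nat where n: "1 / real (Suc n) < r / 2"
      using reals_Archimedean[of "r/2"] r by (auto simp: inverse_eq_divide)
    have "(1::real) / real (Suc n) > 0" by simp
    then obtain d where d: "d \<in> D" "\<rho>1 x d < 1 / real (Suc n)" using bspec[OF D(3) xA(1)] by blast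
    have dsp: "d \<in> space M" "x \<in> space M" using d D(2) xA Asp by auto
    have "\<rho>1 d x = \<rho>1 x d" using metric_sym[OF met1] dsp by blast
    hence xB: "x \<in> B d n" using d dsp unfolding B_def by simp
    have pos: "emeasure M (B d n) \<noteq> 0"
    proof
      assume "emeasure M (B d n) = 0"
      hence "(d,n) \<in> I" using d by (auto simp: I_def)
      hence "B d n \<subseteq> N1" unfolding N1_def using UN_upper[of "(d,n)" I "\<lambda>i. B (fst i) (snd i)"] by simp
      thus False using xB xA(2) by blast
    qed
    have sub: "B d n \<subseteq> {z\<in>space M. \<rho>1 x z < r}"
    proof
      fix z assume z: "z \<in> B d n"
      hence zs: "z \<in> space M" "\<rho>1 d z < 1 / real (Suc n)" by (auto simp: B_def)
      have "\<rho>1 x z \<le> \<rho>1 x d + \<rho>1 d z" using metric_tri[OF met1] dsp zs by blast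
      thus "z \<in> {z\<in>space M. \<rho>1 x z < r}" using zs d n by auto
    qed
    show ?thesis
    proof (rule ccontr)
      assume "\<not> ?thesis"
      hence "B d n \<subseteq> E x \<union> E y" using sub by auto
      moreover have nE: "E x \<union> E y \<in> null_sets M" using En[OF x] En[OF y] by (rule null_sets.Un)
      ultimately have "B d n \<in> null_sets M" using null_sets_subset[OF nE Bs[OF dsp(1)]] by blast
      thus False using pos by auto
    qed
  qed
  have "\<rho>1 x y = \<rho>2 x y" if x: "x \<in> X" and y: "y \<in> X" for x y
  proof -
    have xs: "x \<in> space M" "y \<in> space M" using x y Asp by (auto simp: X_def)
    have met2: "metric_on (space M) \<rho>2" using assms(4) unfolding admissible_metric_def by auto
    have key: "\<bar>\<rho>1 x y - \<rho>2 x y\<bar> < 2 * r" if r: "r > 0" for r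
    proof -
      obtain z where z: "z \<in> space M" "\<rho>1 x z < r" "z \<notin> E x" "z \<notin> E y"
        using ball[OF x y r] by blast
      have e1: "\<rho>1 x z = \<rho>2 x z" "\<rho>1 y z = \<rho>2 y z" using z by (auto simp: E_def)
      have t1: "\<rho>1 x y \<le> \<rho>1 x z + \<rho>1 z y" "\<rho>1 z y \<le> \<rho>1 z x + \<rho>1 x y"
        using metric_tri[OF met1] xs z(1) by blast+
      have t2: "\<rho>2 x y \<le> \<rho>2 x z + \<rho>2 z y" "\<rho>2 z y \<le> \<rho>2 z x + \<rho>2 x y"
        using metric_tri[OF met2] xs z(1) by blast+
      have s: "\<rho>1 z y = \<rho>1 y z" "\<rho>2 z y = \<rho>2 y z" "\<rho>1 z x = \<rho>1 x z" "\<rho>2 z x = \<rho>2 x z"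
        using metric_sym[OF met1] metric_sym[OF met2] xs z(1) by blast+
      show ?thesis using t1 t2 s e1 z(2) by linarith
    qed
    show ?thesis
    proof (rule ccontr)
      assume "\<rho>1 x y \<noteq> \<rho>2 x y"
      hence "\<bar>\<rho>1 x y - \<rho>2 x y\<bar> / 2 > 0" by simp
      from key[OF this] show False by simp
    qed
  qed
  thus ?thesis using full by blast
qed

end
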